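(* Let $p \geqslant 3$ be a prime, $d \geqslant 2$, and $V$ a $d$-dimensional vector space over $\mathbb{F}_p$. Let $G = \mathrm{Sym}(V)$ and $H = \mathrm{AGL}(V)$. Let $W$ be a proper non-trivial subspace of $V$ and let $K < \mathrm{GL}(V)$ be the setwise stabiliser of $W$ in $\mathrm{GL}(V)$. Then there exists $x \in G$ such that $H \cap H^x = K$.
   Context: $\mathrm{AGL}(V)$ is the group of invertible affine transformations $\mathbf{v} \mapsto \mathbf{v}g + \mathbf{u}$ ($g \in \mathrm{GL}(V)$, $\mathbf{u} \in V$) of $V$, regarded as a subgroup of $\mathrm{Sym}(V)$; $\mathrm{GL}(V)$ is the subgroup of linear maps. *)

theory Defs
  imports "HOL-Analysis.Analysis"
begin

definition Sym_V :: "(('a::field) ^ 'n \<Rightarrow> 'a ^ 'n) set" where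
  "Sym_V = {f. bij f}"

definition GL_V :: "(('a::field) ^ 'n \<Rightarrow> 'a ^ 'n) set" where
  "GL_V = {g. bij g \<and> (\<forall>x y. g (x + y) = g x + g y) \<and> (\<forall>c x. g (c *s x) = c *s g x)}"

definition AGL_V :: "(('a::field) ^ 'n \<Rightarrow> 'a ^ 'n) set" where
  "AGL_V = {(\<lambda>v. g v + u) | g u. g \<in> GL_V}"

definition is_subspace_V :: "(('a::field) ^ 'n) set \<Rightarrow> bool" where
  "is_subspace_V W \<longleftrightarrow> 0 \<in> W \<and> (\<forall>x\<in>W. \<forall>y\<in>W. x + y \<in> W) \<and> (\<forall>c. \<forall>x\<in>W. c *s x \<in> W)"

definition GL_stab :: "(('a::field) ^ 'n) set \<Rightarrow> ('a ^ 'n \<Rightarrow> 'a ^ 'n) set" where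
  "GL_stab W = {g \<in> GL_V. g ` W = W}"

text \<open>Conjugate H^x = x^{-1} H x with maps acting on the right (v \<mapsto> v h),
  so as functions composed right-to-left, h^x = x \<circ> h \<circ> x^{-1}.\<close>
definition conj_set :: "('b \<Rightarrow> 'b) set \<Rightarrow> ('b \<Rightarrow> 'b) \<Rightarrow> ('b \<Rightarrow> 'b) set" where
  "conj_set H x = {x \<circ> h \<circ> inv x | h. h \<in> H}"

end

theory Submission
  imports Defs
begin

lemma subsp_add: "is_subspace_V W \<Longrightarrow> a \<in> W \<Longrightarrow> b \<in> W \<Longrightarrow> a + b \<in> W"
  by (simp add: is_subspace_V_def)

lemma subsp_smult: "is_subspace_V W \<Longrightarrow> a \<in> W \<Longrightarrow> c *s a \<in> W"
  by (simp add: is_subspace_V_def)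

lemma subsp_zero: "is_subspace_V W \<Longrightarrow> 0 \<in> W"
  by (simp add: is_subspace_V_def)

lemma subsp_neg: "is_subspace_V W \<Longrightarrow> a \<in> W \<Longrightarrow> - a \<in> W"
  by (metis subsp_smult vector_sneg_minus1)

lemma subsp_diff: "is_subspace_V W \<Longrightarrow> a \<in> W \<Longrightarrow> b \<in> W \<Longrightarrow> a - b \<in> W"
  by (metis subsp_add subsp_neg diff_conv_add_uminus)

lemma subsp_cancel:
  fixes y :: "'a::field ^ 'n"
  shows "is_subspace_V W \<Longrightarrow> c \<noteq> 0 \<Longrightarrow> c *s y \<in> W \<Longrightarrow> y \<in> W"
  by (metis subsp_smult vector_smult_assoc left_inverse vector_smult_lid)

lemma GL_add: "g \<in> GL_V \<Longrightarrow> g (a + b) = g a + g b"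
  by (simp add: GL_V_def)

lemma GL_smult: "g \<in> GL_V \<Longrightarrow> g (c *s a) = c *s g a"
  by (simp add: GL_V_def)

lemma GL_bij: "g \<in> GL_V \<Longrightarrow> bij g"
  by (simp add: GL_V_def)

lemma GL_zero: "g \<in> GL_V \<Longrightarrow> g 0 = 0"
  by (metis GL_smult vector_smult_lzero)

lemma GL_diff: "g \<in> GL_V \<Longrightarrow> g (a - b) = g a - g b"
proof -
  assume g: "g \<in> GL_V"
  have "g a = g (a - b) + g b" using GL_add[OF g, of "a - b" b] by simp
  then show ?thesis by (simp add: algebra_simps)
qed

lemma GL_stab_eq:
  fixes g :: "'a::{field,finite} ^ 'n \<Rightarrow> 'a ^ 'n"
  assumes "g \<in> GL_V" "g ` W \<subseteq> W"
  shows "g ` W = W"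
proof -
  have "inj g" using GL_bij[OF assms(1)] by (simp add: bij_def)
  then have "card (g ` W) = card W" by (simp add: card_image inj_on_subset)
  then show ?thesis using assms(2) by (simp add: card_subset_eq)
qed

lemma GL_out:
  assumes "g \<in> GL_V" "g ` W = W" "v \<notin> W"
  shows "g v \<notin> W"
proof
  assume "g v \<in> W"
  then obtain z where "z \<in> W" "g v = g z" using assms(2) by blast
  moreover have "inj g" using GL_bij[OF assms(1)] by (simp add: bij_def)
  ultimately show False using assms(3) by (metis injD)
qed

theorem lemma3p3:
  fixes W :: "('a::{field,finite} ^ 'n) set"
  assumes "prime CARD('a)" and "CARD('a) \<ge> 3"
    and "CARD('n) \<ge> 2"
    and "is_subspace_V W" and "W \<noteq> {0}" and "W \<noteq> UNIV"
  shows "\<exists>x \<in> Sym_V. AGL_V \<inter> conj_set AGL_V x = GL_stab W"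
proof -
  note S = assms(4)
  have W0: "0 \<in> W" using subsp_zero[OF S] .
  obtain c :: 'a where c0: "c \<noteq> 0" and c1: "c \<noteq> 1"
  proof -
    have "card {0::'a, 1} \<le> 2" by (simp add: card_insert_le_m1)
    have "{0::'a, 1} \<noteq> UNIV"
    proof
      assume "{0::'a, 1} = UNIV"
      then have "CARD('a) \<le> 2" using \<open>card {0::'a, 1} \<le> 2\<close> by simp
      then show False using assms(2) by simp
    qed
    then show ?thesis using that by blast
  qed
  have c1': "c - 1 \<noteq> 0" using c1 by simp
  have c1'': "1 - c \<noteq> 0" using c1 by simp
  obtain a0 where a0: "a0 \<notin> W" using assms(6) by blast
  obtain w0 where w0: "w0 \<in> W" "w0 \<noteq> 0" using assms(5) W0 by blast
  define x where "x = (\<lambda>v. if v \<in> W then c *s v else v)"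
  define y where "y = (\<lambda>v. if v \<in> W then inverse c *s v else v)"
  have xy: "x (y v) = v" for v
    using c0 subsp_smult[OF S] by (simp add: x_def y_def vector_smult_assoc)
  have yx: "y (x v) = v" for v
    using c0 subsp_smult[OF S] by (simp add: x_def y_def vector_smult_assoc)
  have bijx: "bij x" by (rule o_bij[of y]) (auto simp: xy yx)
  have invx: "inv x = y" by (rule inv_equality) (auto simp: xy yx)
  have xin: "v \<in> W \<Longrightarrow> x v = c *s v" for v by (simp add: x_def)
  have xout: "v \<notin> W \<Longrightarrow> x v = v" for v by (simp add: x_def)
  have xdiff: "x v - v \<in> W" for v
  proof (cases "v \<in> W")
    case True then show ?thesis using xin subsp_diff[OF S] subsp_smult[OF S] by simp
  next
    case False then show ?thesis using xout W0 by simp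
  qed
  have xW: "x v \<in> W \<longleftrightarrow> v \<in> W" for v
  proof (cases "v \<in> W")
    case True then show ?thesis using xin[OF True] subsp_smult[OF S True] by simp
  next
    case False then show ?thesis using xout[OF False] by simp
  qed
  show ?thesis
  proof (rule bexI[of _ x])
    show "x \<in> Sym_V" using bijx by (simp add: Sym_V_def)
    show "AGL_V \<inter> conj_set AGL_V x = GL_stab W"
    proof (intro equalityI subsetI)
      fix k assume "k \<in> GL_stab W"
      then have kG: "k \<in> GL_V" and kW: "k ` W = W" by (auto simp: GL_stab_def)
      have comm: "k (x z) = x (k z)" for z
      proof (cases "z \<in> W")
        case True
        then have "k z \<in> W" using kW by blast
        then show ?thesis using True by (simp add: xin GL_smult[OF kG])
      next
        case False
        then show ?thesis using GL_out[OF kG kW False] by (simp add: xout)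
      qed
      have kA: "k \<in> AGL_V" unfolding AGL_V_def using kG by force
      have "k = x \<circ> k \<circ> inv x"
        by (rule ext) (simp add: invx comm[symmetric] xy)
      then have "k \<in> conj_set AGL_V x" unfolding conj_set_def using kA by blast
      then show "k \<in> AGL_V \<inter> conj_set AGL_V x" using kA by blast
    next
      fix k assume "k \<in> AGL_V \<inter> conj_set AGL_V x"
      then have kA: "k \<in> AGL_V" and "k \<in> conj_set AGL_V x" by auto
      then obtain g u where k: "k = (\<lambda>v. g v + u)" and gG: "g \<in> GL_V"
        unfolding AGL_V_def by blast
      obtain h where kh: "k = x \<circ> h \<circ> inv x" and hA: "h \<in> AGL_V"
        using \<open>k \<in> conj_set AGL_V x\<close> unfolding conj_set_def by blast
      then obtain g' t where h: "h = (\<lambda>v. g' v + t)" and gG': "g' \<in> GL_V"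
        unfolding AGL_V_def by blast
      have E: "g (x v) + u = x (g' v + t)" for v
      proof -
        have "k (x v) = x (h (y (x v)))" using kh invx by simp
        then show ?thesis using k h yx by simp
      qed
      have D1: "(g v + u) - (g' v + t) \<in> W" if "v \<notin> W" for v
        using E[of v] xdiff[of "g' v + t"] xout[OF that] by simp
      have D2: "(g (c *s v) + u) - (g' v + t) \<in> W" if "v \<in> W" for v
        using E[of v] xdiff[of "g' v + t"] xin[OF that] by simp
      have E0: "u = x t" using E[of 0] xin[OF W0] GL_zero[OF gG] GL_zero[OF gG'] by simp
      have ut: "u - t \<in> W" using D2[OF W0] GL_zero[OF gG] GL_zero[OF gG'] by simp
      have gW: "g w \<in> W" and gW': "g' w \<in> W" if w: "w \<in> W" for w
      proof -
        have aw: "a0 + w \<notin> W"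
        proof
          assume "a0 + w \<in> W"
          then have "(a0 + w) - w \<in> W" using subsp_diff[OF S] w by blast
          then show False using a0 by simp
        qed
        have "((g (a0 + w) + u) - (g' (a0 + w) + t)) - ((g a0 + u) - (g' a0 + t)) \<in> W"
          using subsp_diff[OF S D1[OF aw] D1[OF a0]] .
        then have d1: "g w - g' w \<in> W"
          by (simp add: GL_add[OF gG] GL_add[OF gG'] algebra_simps)
        have "((g (c *s w) + u) - (g' w + t)) - (u - t) - (g w - g' w) \<in> W"
          using subsp_diff[OF S subsp_diff[OF S D2[OF w] ut] d1] .
        then have "(c - 1) *s g w \<in> W"
          by (simp add: GL_smult[OF gG] vector_sub_rdistrib algebra_simps)
        then show g1: "g w \<in> W" using subsp_cancel[OF S c1'] by blast
        have "g w - (g w - g' w) \<in> W" using subsp_diff[OF S g1 d1] .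
        then show "g' w \<in> W" by simp
      qed
      have gWW: "g ` W = W" using GL_stab_eq[OF gG] gW by blast
      have gWW': "g' ` W = W" using GL_stab_eq[OF gG'] gW' by blast
      have injg: "inj g" using GL_bij[OF gG] by (simp add: bij_def)
      have surjg': "surj g'" using GL_bij[OF gG'] by (simp add: bij_def)
      have tW: "t \<in> W"
      proof (rule ccontr)
        assume tn: "t \<notin> W"
        then have ut': "u = t" using E0 xout by simp
        have hw: "g' w0 + t \<notin> W"
        proof
          assume "g' w0 + t \<in> W"
          then have "(g' w0 + t) - g' w0 \<in> W" using subsp_diff[OF S _ gW'[OF w0(1)]] by blast
          then show False using tn by simp
        qed
        have e1: "c *s g w0 = g' w0"
          using E[of w0] xin[OF w0(1)] xout[OF hw] ut' GL_smult[OF gG] by simp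
        obtain v0 where v0: "g' v0 = - t" using surjg' by (metis surjD)
        have v0n: "v0 \<notin> W"
        proof
          assume "v0 \<in> W"
          then have "- (g' v0) \<in> W" using gW' subsp_neg[OF S] by blast
          then show False using v0 tn by simp
        qed
        define a where "a = c *s v0"
        have an: "a \<notin> W" using v0n subsp_cancel[OF S c0] a_def by blast
        have awn: "a + w0 \<notin> W"
        proof
          assume "a + w0 \<in> W"
          then have "(a + w0) - w0 \<in> W" using subsp_diff[OF S] w0 by blast
          then show False using an by simp
        qed
        have ha: "g' a + t = (1 - c) *s t"
          by (simp add: a_def GL_smult[OF gG'] v0 vector_sub_rdistrib vector_smult_rneg)
        have han: "g' a + t \<notin> W"
          using ha subsp_cancel[OF S c1''] tn by metis
        have hawn: "g' (a + w0) + t \<notin> W"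
        proof
          assume "g' (a + w0) + t \<in> W"
          then have "(g' (a + w0) + t) - g' w0 \<in> W" using subsp_diff[OF S _ gW'[OF w0(1)]] by blast
          then have "g' a + t \<in> W" by (simp add: GL_add[OF gG'] algebra_simps)
          then show False using han by simp
        qed
        have e2: "g a + u = g' a + t" using E[of a] xout[OF an] xout[OF han] by simp
        have e3: "g (a + w0) + u = g' (a + w0) + t" using E[of "a + w0"] xout[OF awn] xout[OF hawn] by simp
        have "g (a + w0) + u - (g a + u) = g' (a + w0) + t - (g' a + t)" using e2 e3 by simp
        then have "g w0 = g' w0" by (simp add: GL_add[OF gG] GL_add[OF gG'])
        then have "c *s g w0 = 1 *s g w0" using e1 by simp
        then have "g w0 = 0" using c1 by (simp only: vector_mul_rcancel) simp
        then have "g w0 = g 0" using GL_zero[OF gG] by simp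
        then show False using w0 injg by (metis injD)
      qed
      have u_ct: "u = c *s t" using E0 xin[OF tW] by simp
      have gan: "g' a0 \<notin> W" using GL_out[OF gG' gWW' a0] .
      have ca0: "c *s a0 \<notin> W" using subsp_cancel[OF S c0] a0 by blast
      have h1: "g' a0 + t \<notin> W"
      proof
        assume "g' a0 + t \<in> W"
        then have "(g' a0 + t) - t \<in> W" using subsp_diff[OF S _ tW] by blast
        then show False using gan by simp
      qed
      have h2: "g' (c *s a0) + t \<notin> W"
      proof
        assume "g' (c *s a0) + t \<in> W"
        then have "(g' (c *s a0) + t) - t \<in> W" using subsp_diff[OF S _ tW] by blast
        then have "c *s g' a0 \<in> W" by (simp add: GL_smult[OF gG'])
        then show False using gan subsp_cancel[OF S c0] by blast
      qed
      have e1: "g a0 + c *s t = g' a0 + t" using E[of a0] xout[OF a0] xout[OF h1] u_ct by simp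
      have e2: "c *s g a0 + c *s t = c *s g' a0 + t"
        using E[of "c *s a0"] xout[OF ca0] xout[OF h2] u_ct GL_smult[OF gG] GL_smult[OF gG'] by simp
      have t0: "t = 0"
      proof -
        have "((c - 1) * (c - 1)) *s t = 0"
        proof (subst vec_eq_iff, intro allI)
          fix i
          have f1: "g a0 $ i + c * t $ i = g' a0 $ i + t $ i"
            using arg_cong[OF e1, of "\<lambda>z. z $ i"] by simp
          have f2: "c * g a0 $ i + c * t $ i = c * g' a0 $ i + t $ i"
            using arg_cong[OF e2, of "\<lambda>z. z $ i"] by simp
          have "(c - 1) * (c - 1) * t $ i = c * ((g a0 $ i + c * t $ i) - (g' a0 $ i + t $ i))
              - ((c * g a0 $ i + c * t $ i) - (c * g' a0 $ i + t $ i))"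
            by (simp add: algebra_simps)
          also have "\<dots> = 0" using f1 f2 by simp
          finally show "(((c - 1) * (c - 1)) *s t) $ i = 0 $ i" by simp
        qed
        then show ?thesis using c1' by simp
      qed
      have u0: "u = 0" using u_ct t0 by simp
      have "k = g" using k u0 by (simp add: fun_eq_iff)
      then show "k \<in> GL_stab W" using gG gWW by (simp add: GL_stab_def)
    qed
  qed
qed

end
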